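(* Let $c$ (with $X,Y$) satisfy the standing assumptions below, and suppose $c$ satisfies Loeper's condition. If there exist $r>0$ and $M\ge1$ such that $$F(v_t)-F(v_0)\le Mt\,(F(v_1)-F(v_0))_+\quad\text{for all }t\in[0,1]$$ holds for all $x_0,x_1\in X$ and all $v_0,v_1\in Y^*_{x_0}$ with $|v_1-v_0|\le r$, then $c$ is QQconv.
   Context: Standing assumptions: $X,Y\subset\mathbb{R}^n$ compact; $c:X\times Y\to\mathbb{R}$ measurable, differentiable, with mixed Hessians $D^2_{xy}c$, $D^2_{yx}c$ existing and $(D^2_{xy}c)^T=D^2_{yx}c$; $-D_xc(x,\cdot)$ injective on $Y$ for each $x$ and $-D_yc(\cdot,y)$ injective on $X$ for each $y$; $D^2_{xy}c(x,y)$ invertible everywhere; $D^2_{xy}c$ Lipschitz; $Y^*_x:=-D_xc(x,Y)$ convex for each $x\in X$ and $X^*_y:=-D_yc(X,y)$ convex for each $y\in Y$. The map $\exp^c_x:Y^*_x\to Y$ is the inverse of $-D_xc(x,\cdot)$. For $x_0,x_1\in X$, define $F:Y^*_{x_0}\to\mathbb{R}$ by $F(v)=-c(x_1,\exp^c_{x_0}(v))+c(x_0,\exp^c_{x_0}(v))$ (it depends on $x_0,x_1$), and $v_t=(1-t)v_0+tv_1$. Loeper's condition: $F(v_t)\le\max\{F(v_0),F(v_1)\}$ for all $x_0,x_1\in X$, $v_0,v_1\in Y^*_{x_0}$, $t\in[0,1]$. QQconv: there is $M'\ge1$ with $F(v_t)-F(v_0)\le M't\,(F(v_1)-F(v_0))_+$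 for all $x_0,x_1\in X$, $v_0,v_1\in Y^*_{x_0}$, $t\in[0,1]$; here $a_+=\max\{a,0\}$. *)

theory Defs
  imports "HOL-Analysis.Analysis"
begin

text \<open>Points of X, Y live in \<open>real^'n\<close>. The cost c is a total function
  on \<open>real^'n \<times> real^'n\<close>; only its behaviour at and near \<open>X \<times> Y\<close> matters.
  \<open>Dxc x y\<close> is the gradient of c in x, \<open>Dyc x y\<close> the gradient in y,
  \<open>Dxy x y\<close> is the mixed Hessian \<open>D^2_{xy} c\<close> (entry (i,j) = d/dy_j d/dx_i c),
  \<open>Dyx x y\<close> is \<open>D^2_{yx} c\<close>.\<close>

definition standing_assumptions ::
  "(real^'n::finite) set \<Rightarrow> (real^'n) set \<Rightarrow> (real^'n \<Rightarrow> real^'n \<Rightarrow> real)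
   \<Rightarrow> (real^'n \<Rightarrow> real^'n \<Rightarrow> real^'n) \<Rightarrow> (real^'n \<Rightarrow> real^'n \<Rightarrow> real^'n)
   \<Rightarrow> (real^'n \<Rightarrow> real^'n \<Rightarrow> real^'n^'n) \<Rightarrow> (real^'n \<Rightarrow> real^'n \<Rightarrow> real^'n^'n) \<Rightarrow> bool"
where
  "standing_assumptions X Y c Dxc Dyc Dxy Dyx \<longleftrightarrow>
     compact X \<and> compact Y \<and>
     (\<lambda>p. c (fst p) (snd p)) \<in> borel_measurable (restrict_space borel (X \<times> Y)) \<and>
     \<comment> \<open>c differentiable at every point of X \<times> Y, with partial gradients Dxc, Dyc\<close>
     (\<forall>x\<in>X. \<forall>y\<in>Y. ((\<lambda>p. c (fst p) (snd p)) has_derivative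
          (\<lambda>p. Dxc x y \<bullet> fst p + Dyc x y \<bullet> snd p)) (at (x, y))) \<and>
     \<comment> \<open>mixed Hessians exist\<close>
     (\<forall>x\<in>X. \<forall>y\<in>Y. ((\<lambda>y'. Dxc x y') has_derivative (\<lambda>k. Dxy x y *v k)) (at y within Y)) \<and>
     (\<forall>x\<in>X. \<forall>y\<in>Y. ((\<lambda>x'. Dyc x' y) has_derivative (\<lambda>h. Dyx x y *v h)) (at x within X)) \<and>
     (\<forall>x\<in>X. \<forall>y\<in>Y. transpose (Dxy x y) = Dyx x y) \<and>
     \<comment> \<open>twist conditions\<close>
     (\<forall>x\<in>X. inj_on (\<lambda>y. - Dxc x y) Y) \<and>
     (\<forall>y\<in>Y. inj_on (\<lambda>x. - Dyc x y) X) \<and>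
     (\<forall>x\<in>X. \<forall>y\<in>Y. invertible (Dxy x y)) \<and>
     (\<exists>L. L-lipschitz_on (X \<times> Y) (\<lambda>p. Dxy (fst p) (snd p))) \<and>
     \<comment> \<open>convexity of the target sets\<close>
     (\<forall>x\<in>X. convex ((\<lambda>y. - Dxc x y) ` Y)) \<and>
     (\<forall>y\<in>Y. convex ((\<lambda>x. - Dyc x y) ` X))"

text \<open>\<open>Y*_x = -D_x c(x, Y)\<close>\<close>
definition Ystar :: "(real^'n::finite \<Rightarrow> real^'n \<Rightarrow> real^'n) \<Rightarrow> (real^'n) set \<Rightarrow> real^'n \<Rightarrow> (real^'n) set"
  where "Ystar Dxc Y x = (\<lambda>y. - Dxc x y) ` Y"

text \<open>\<open>exp^c_x\<close>: inverse of \<open>-D_x c(x,\<cdot>)\<close> on Y.\<close>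
definition cexp :: "(real^'n::finite \<Rightarrow> real^'n \<Rightarrow> real^'n) \<Rightarrow> (real^'n) set \<Rightarrow> real^'n \<Rightarrow> real^'n \<Rightarrow> real^'n"
  where "cexp Dxc Y x v = (THE y. y \<in> Y \<and> - Dxc x y = v)"

text \<open>\<open>F(v) = -c(x1, exp^c_{x0} v) + c(x0, exp^c_{x0} v)\<close>\<close>
definition Fc :: "(real^'n::finite \<Rightarrow> real^'n \<Rightarrow> real) \<Rightarrow> (real^'n \<Rightarrow> real^'n \<Rightarrow> real^'n) \<Rightarrow> (real^'n) set
     \<Rightarrow> real^'n \<Rightarrow> real^'n \<Rightarrow> real^'n \<Rightarrow> real"
  where "Fc c Dxc Y x0 x1 v = - c x1 (cexp Dxc Y x0 v) + c x0 (cexp Dxc Y x0 v)"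

definition loeper :: "(real^'n::finite) set \<Rightarrow> (real^'n) set \<Rightarrow> (real^'n \<Rightarrow> real^'n \<Rightarrow> real)
    \<Rightarrow> (real^'n \<Rightarrow> real^'n \<Rightarrow> real^'n) \<Rightarrow> bool" where
  "loeper X Y c Dxc \<longleftrightarrow>
     (\<forall>x0\<in>X. \<forall>x1\<in>X. \<forall>v0\<in>Ystar Dxc Y x0. \<forall>v1\<in>Ystar Dxc Y x0. \<forall>t\<in>{0..1::real}.
        Fc c Dxc Y x0 x1 ((1 - t) *\<^sub>R v0 + t *\<^sub>R v1)
          \<le> max (Fc c Dxc Y x0 x1 v0) (Fc c Dxc Y x0 x1 v1))"

definition QQconv :: "(real^'n::finite) set \<Rightarrow> (real^'n) set \<Rightarrow> (real^'n \<Rightarrow> real^'n \<Rightarrow> real)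
    \<Rightarrow> (real^'n \<Rightarrow> real^'n \<Rightarrow> real^'n) \<Rightarrow> bool" where
  "QQconv X Y c Dxc \<longleftrightarrow>
     (\<exists>M'\<ge>1. \<forall>x0\<in>X. \<forall>x1\<in>X. \<forall>v0\<in>Ystar Dxc Y x0. \<forall>v1\<in>Ystar Dxc Y x0. \<forall>t\<in>{0..1::real}.
        Fc c Dxc Y x0 x1 ((1 - t) *\<^sub>R v0 + t *\<^sub>R v1) - Fc c Dxc Y x0 x1 v0
          \<le> M' * t * max (Fc c Dxc Y x0 x1 v1 - Fc c Dxc Y x0 x1 v0) 0)"

end

theory Submission
  imports Defs
begin

lemma minv: "invertible (A::real^'n^'m) \<Longrightarrow> A ** matrix_inv A = mat 1 \<and> matrix_inv A ** A = mat 1"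
  unfolding invertible_def matrix_inv_def by (rule someI_ex)

lemma inv_deriv_within:
  fixes f :: "'a::real_normed_vector \<Rightarrow> 'b::real_normed_vector"
  assumes df: "(f has_derivative f') (at x within S)"
    and bl: "bounded_linear g'" and gf': "\<And>k. g' (f' k) = k"
    and xS: "x \<in> S" and gf: "\<And>z. z \<in> S \<Longrightarrow> g (f z) = z"
    and cg: "continuous (at (f x) within f ` S) g"
  shows "(g has_derivative g') (at (f x) within f ` S)"
proof -
  obtain C where C: "C > 0" "\<And>u. norm (g' u) \<le> norm u * C"
    using bounded_linear.pos_bounded[OF bl] by blast
  have bf: "bounded_linear f'" using df by (simp add: has_derivative_within_alt)
  have fd: "\<forall>e>0. \<exists>d>0. \<forall>y\<in>S. norm(y - x) < d \<longrightarrow> norm (f y - f x - f' (y - x)) \<le> e * norm (y - x)"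
    using df by (simp add: has_derivative_within_alt)
  show ?thesis
    unfolding has_derivative_within_alt
  proof (intro conjI bl allI impI)
    fix e :: real assume e: "e > 0"
    obtain d1 where d1: "d1 > 0" "\<And>y. y\<in>S \<Longrightarrow> norm(y - x) < d1 \<Longrightarrow> norm (f y - f x - f' (y - x)) \<le> (1/(2*C)) * norm (y - x)"
      using fd C(1) by (metis divide_pos_pos mult_pos_pos zero_less_numeral zero_less_one)
    obtain d2 where d2: "d2 > 0" "\<And>y. y\<in>S \<Longrightarrow> norm(y - x) < d2 \<Longrightarrow> norm (f y - f x - f' (y - x)) \<le> (e/(2*C*C)) * norm (y - x)"
      using fd C(1) e by (metis divide_pos_pos mult_pos_pos zero_less_numeral)
    obtain d3 where d3: "d3 > 0" "\<And>w. w \<in> f ` S \<Longrightarrow> dist w (f x) < d3 \<Longrightarrow> dist (g w) (g (f x)) < min d1 d2"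
      using cg d1(1) d2(1) unfolding continuous_within_eps_delta by (metis min_less_iff_conj)
    show "\<exists>d>0. \<forall>y\<in>f ` S. norm (y - f x) < d \<longrightarrow> norm (g y - g (f x) - g' (y - f x)) \<le> e * norm (y - f x)"
    proof (intro exI[of _ d3] conjI ballI impI d3(1))
      fix w assume w: "w \<in> f ` S" "norm (w - f x) < d3"
      then obtain z where z: "z \<in> S" "w = f z" by auto
      have gz: "g w = z" "g (f x) = x" using z gf xS by auto
      have zx: "norm (z - x) < d1" "norm (z - x) < d2"
        using d3(2)[OF w(1)] w(2) gz by (auto simp: dist_norm)
      have k1: "norm (z - x) \<le> norm (f' (z - x)) * C" using C(2)[of "f' (z - x)"] gf' by simp
      have k2: "norm (f z - f x - f' (z - x)) \<le> (1/(2*C)) * norm (z - x)" using d1(2)[OF z(1) zx(1)] .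
      have tri: "norm (f' (z - x)) \<le> norm (f z - f x) + norm (f z - f x - f' (z - x))"
        by (metis norm_triangle_sub norm_minus_commute)
      have "norm (z - x) \<le> (norm (f z - f x) + (1/(2*C)) * norm (z - x)) * C"
        using k1 tri k2 C(1) by (meson order_trans mult_right_mono add_left_mono less_imp_le)
      also have "\<dots> = C * norm (f z - f x) + norm (z - x) / 2" using C(1) by (simp add: field_simps)
      finally have k3: "norm (z - x) \<le> 2 * C * norm (f z - f x)" by linarith
      have "g w - g (f x) - g' (w - f x) = - g' (f z - f x - f' (z - x))"
        using gz z bl gf' by (simp add: linear_simps bounded_linear.linear)
      hence "norm (g w - g (f x) - g' (w - f x)) \<le> norm (f z - f x - f' (z - x)) * C"
        using C(2) by simp
      also have "\<dots> \<le> (e/(2*C*C)) * norm (z - x) * C"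
        using d2(2)[OF z(1) zx(2)] C(1) by (meson mult_right_mono less_imp_le)
      also have "\<dots> \<le> (e/(2*C*C)) * (2 * C * norm (f z - f x)) * C"
        using k3 C(1) e by (intro mult_right_mono mult_left_mono) auto
      also have "\<dots> = e * norm (w - f x)" using C(1) z by (simp add: field_simps)
      finally show "norm (g w - g (f x) - g' (w - f x)) \<le> e * norm (w - f x)" .
    qed
  qed
qed


lemma cont_mv:
  fixes F :: "'a::topological_space \<Rightarrow> real^'n^'m"
  assumes "continuous_on S F" "continuous_on S G"
  shows "continuous_on S (\<lambda>p. F p *v G p)"
  unfolding matrix_vector_mult_def
  by (intro continuous_intros continuous_on_component assms)

lemma mv_bound:
  fixes A :: "real^'n^'m"
  assumes "norm A \<le> N"
  shows "norm (A *v u) \<le> (real CARD('m) * real CARD('n) * N) * norm u"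
proof -
  have "\<And>i j. \<bar>A$i$j\<bar> \<le> N"
  proof -
    fix i j
    have "\<bar>A$i$j\<bar> \<le> norm (A$i)" by (rule component_le_norm_cart)
    also have "\<dots> \<le> norm A" by (rule Finite_Cartesian_Product.norm_nth_le)
    finally show "\<bar>A$i$j\<bar> \<le> N" using assms by linarith
  qed
  then have "onorm ((*v) A) \<le> real CARD('m) * real CARD('n) * N"
    by (rule onorm_le_matrix_component)
  moreover have "norm (A *v u) \<le> onorm ((*v) A) * norm u"
    by (rule onorm) simp
  ultimately show ?thesis by (meson mult_right_mono norm_ge_zero order_trans)
qed

lemma sphere_ne: "sphere (0::real^'n) 1 \<noteq> {}"
  using vector_choose_size[of 1] by (auto simp: sphere_def)


lemma diam_bound:
  fixes X Y :: "(real^'n::finite) set"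
    and c :: "real^'n \<Rightarrow> real^'n \<Rightarrow> real"
    and Dxc Dyc :: "real^'n \<Rightarrow> real^'n \<Rightarrow> real^'n"
    and Dxy Dyx :: "real^'n \<Rightarrow> real^'n \<Rightarrow> real^'n^'n"
  assumes SA: "standing_assumptions X Y c Dxc Dyc Dxy Dyx"
  shows "\<exists>D. \<forall>x\<in>X. \<forall>v\<in>Ystar Dxc Y x. \<forall>w\<in>Ystar Dxc Y x. norm (v - w) \<le> D"
proof (cases "X = {} \<or> Y = {}")
  case True
  then show ?thesis by (auto simp: Ystar_def)
next
  case False
  then obtain xs where xs: "xs \<in> X" and Yne: "Y \<noteq> {}" by auto
  have cX: "compact X" and cY: "compact Y" using SA by (auto simp: standing_assumptions_def)
  have dD: "\<And>x y. x \<in> X \<Longrightarrow> y \<in> Y \<Longrightarrow> ((\<lambda>y'. Dxc x y') has_derivative (\<lambda>k. Dxy x y *v k)) (at y within Y)"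
    using SA by (auto simp: standing_assumptions_def)
  have inj: "\<And>x. x \<in> X \<Longrightarrow> inj_on (\<lambda>y. - Dxc x y) Y"
    using SA by (auto simp: standing_assumptions_def)
  have inv: "\<And>x y. x \<in> X \<Longrightarrow> y \<in> Y \<Longrightarrow> invertible (Dxy x y)"
    using SA by (auto simp: standing_assumptions_def)
  have cvx: "convex ((\<lambda>y. - Dxc xs y) ` Y)"
    using SA xs by (auto simp: standing_assumptions_def)
  obtain L where "L-lipschitz_on (X \<times> Y) (\<lambda>p. Dxy (fst p) (snd p))"
    using SA by (auto simp: standing_assumptions_def)
  then have cD: "continuous_on (X \<times> Y) (\<lambda>p. Dxy (fst p) (snd p))"
    by (rule lipschitz_on_continuous_on)
  have "compact ((\<lambda>p. Dxy (fst p) (snd p)) ` (X \<times> Y))"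
    by (intro compact_continuous_image cD compact_Times cX cY)
  then obtain N where N: "\<And>p. p \<in> X \<times> Y \<Longrightarrow> norm (Dxy (fst p) (snd p)) \<le> N"
    by (meson compact_imp_bounded bounded_iff imageI)
  define B where "B = real CARD('n) * real CARD('n) * N"
  have Bop: "\<And>x y u. x \<in> X \<Longrightarrow> y \<in> Y \<Longrightarrow> norm (Dxy x y *v u) \<le> B * norm u"
    unfolding B_def by (rule mv_bound) (use N in force)
  \<comment> \<open>lower bound\<close>
  define S where "S = Y \<times> sphere (0::real^'n) 1"
  have cS: "compact S" unfolding S_def by (intro compact_Times cY compact_sphere)
  have Sne: "S \<noteq> {}" unfolding S_def using Yne sphere_ne by auto
  have cxs: "continuous_on Y (\<lambda>y. Dxy xs y)"
  proof -
    have "continuous_on Y ((\<lambda>p. Dxy (fst p) (snd p)) \<circ> (\<lambda>y. (xs, y)))"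
      by (rule continuous_on_compose) (auto intro!: continuous_intros continuous_on_subset[OF cD] simp: xs)
    then show ?thesis by (simp add: o_def)
  qed
  have cf: "continuous_on S (\<lambda>p. norm (Dxy xs (fst p) *v snd p))"
  proof -
    have "continuous_on S (\<lambda>p. Dxy xs (fst p))"
      by (rule continuous_on_compose2[OF cxs continuous_on_fst]) (auto simp: S_def)
    then show ?thesis by (intro continuous_intros cont_mv) auto
  qed
  obtain p0 where p0: "p0 \<in> S" "\<And>p. p \<in> S \<Longrightarrow> norm (Dxy xs (fst p0) *v snd p0) \<le> norm (Dxy xs (fst p) *v snd p)"
    using continuous_attains_inf[OF cS Sne cf] by blast
  define \<delta> where "\<delta> = norm (Dxy xs (fst p0) *v snd p0)"
  have dpos: "\<delta> > 0"
  proof -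
    have "fst p0 \<in> Y" "norm (snd p0) = 1" using p0(1) by (auto simp: S_def)
    then have "invertible (Dxy xs (fst p0))" using inv xs by auto
    then have "Dxy xs (fst p0) *v snd p0 \<noteq> 0"
      using \<open>norm (snd p0) = 1\<close> minv
      by (metis matrix_vector_mul_assoc matrix_vector_mul_lid matrix_vector_mult_0_right norm_zero zero_neq_one)
    then show ?thesis unfolding \<delta>_def by simp
  qed
  have dlow: "\<delta> * norm k \<le> norm (Dxy xs y *v k)" if y: "y \<in> Y" for y k
  proof (cases "k = 0")
    case True then show ?thesis by simp
  next
    case False
    have "(y, (1/norm k) *\<^sub>R k) \<in> S" using y False by (simp add: S_def)
    then have "\<delta> \<le> norm (Dxy xs y *v ((1/norm k) *\<^sub>R k))" using p0(2) \<delta>_def by fastforce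
    also have "\<dots> = norm (Dxy xs y *v k) / norm k" by (simp add: matrix_vector_mult_scaleR)
    finally show ?thesis using False by (simp add: field_simps)
  qed
  \<comment> \<open>the inverse map\<close>
  define h where "h = (\<lambda>y. - Dxc xs y)"
  define K where "K = h ` Y"
  define g where "g = the_inv_into Y h"
  have injh: "inj_on h Y" unfolding h_def using inj xs by simp
  have dh: "\<And>y. y \<in> Y \<Longrightarrow> (h has_derivative (\<lambda>k. - (Dxy xs y *v k))) (at y within Y)"
    unfolding h_def by (intro has_derivative_minus dD xs)
  have ch: "continuous_on Y h" using dh by (rule has_derivative_continuous_on)
  have cg: "continuous_on K g" unfolding K_def g_def by (rule continuous_on_inv_into[OF ch cY injh])
  have gh: "\<And>y. y \<in> Y \<Longrightarrow> g (h y) = y" unfolding g_def using injh by (simp add: the_inv_into_f_f)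
  have gK: "g ` K = Y" unfolding g_def K_def using injh by simp
  have cK: "compact K" unfolding K_def by (rule compact_continuous_image[OF ch cY])
  then obtain R where R: "\<And>v. v \<in> K \<Longrightarrow> norm v \<le> R" by (meson compact_imp_bounded bounded_iff)
  have cvK: "convex K" using cvx unfolding K_def h_def .
  define g' where "g' = (\<lambda>y k. - (matrix_inv (Dxy xs y) *v k))"
  have g'1: "\<And>y k. y \<in> Y \<Longrightarrow> g' y (- (Dxy xs y *v k)) = k"
  proof -
    fix y k assume y: "y \<in> Y"
    have I: "matrix_inv (Dxy xs y) ** Dxy xs y = mat 1" using minv inv xs y by blast
    have "matrix_inv (Dxy xs y) *v (- (Dxy xs y *v k)) = - (matrix_inv (Dxy xs y) *v (Dxy xs y *v k))"
      by (rule linear_neg[OF matrix_vector_mul_linear])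
    then show "g' y (- (Dxy xs y *v k)) = k" unfolding g'_def by (simp add: matrix_vector_mul_assoc I)
  qed
  have g'2: "\<And>y k. y \<in> Y \<Longrightarrow> norm (g' y k) \<le> norm k / \<delta>"
  proof -
    fix y k assume y: "y \<in> Y"
    have "Dxy xs y *v g' y k = - k"
    proof -
      have I: "Dxy xs y ** matrix_inv (Dxy xs y) = mat 1" using minv inv xs y by blast
      have "Dxy xs y *v (- (matrix_inv (Dxy xs y) *v k)) = - (Dxy xs y *v (matrix_inv (Dxy xs y) *v k))"
        by (rule linear_neg[OF matrix_vector_mul_linear])
      then show ?thesis unfolding g'_def by (simp add: matrix_vector_mul_assoc I)
    qed
    then have "\<delta> * norm (g' y k) \<le> norm k" using dlow[OF y, of "g' y k"] by simp
    then show "norm (g' y k) \<le> norm k / \<delta>" using dpos by (simp add: field_simps)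
  qed
  have blg': "\<And>y. bounded_linear (g' y)" unfolding g'_def
    by (intro bounded_linear_minus matrix_vector_mul_bounded_linear)
  have dg: "(g has_derivative g' (g v)) (at v within K)" if v: "v \<in> K" for v
  proof -
    obtain y where y: "y \<in> Y" "v = h y" using v K_def by auto
    have cgat: "continuous (at (h y) within h ` Y) g"
      using cg v y unfolding K_def by (simp add: continuous_on_eq_continuous_within)
    have "(g has_derivative g' y) (at (h y) within h ` Y)"
      by (rule inv_deriv_within[OF dh[OF y(1)] blg' g'1[OF y(1)] y(1) gh cgat])
    then show ?thesis using y gh K_def by simp
  qed
  define B' where "B' = B / \<delta>"
  have main: "norm (Dxc x y1 - Dxc x y0) \<le> B' * (2 * R)" if x: "x \<in> X" and y: "y0 \<in> Y" "y1 \<in> Y" for x y0 y1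
  proof -
    define \<phi> where "\<phi> = (\<lambda>v. - Dxc x (g v))"
    define \<phi>' where "\<phi>' = (\<lambda>v. (\<lambda>k. - (Dxy x (g v) *v k)) \<circ> g' (g v))"
    have d\<phi>: "(\<phi> has_derivative \<phi>' v) (at v within K)" if v: "v \<in> K" for v
    proof -
      have gv: "g v \<in> Y" using v gK by auto
      have "((\<lambda>y. - Dxc x y) has_derivative (\<lambda>k. - (Dxy x (g v) *v k))) (at (g v) within g ` K)"
        unfolding gK by (intro has_derivative_minus dD x gv)
      from diff_chain_within[OF dg[OF v] this] show ?thesis
        unfolding \<phi>_def \<phi>'_def by (simp add: o_def)
    qed
    have ob: "onorm (\<phi>' v) \<le> B'" if v: "v \<in> K" for v
    proof (rule onorm_le)
      fix k
      have gv: "g v \<in> Y" using v gK by auto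
      have "norm (\<phi>' v k) = norm (Dxy x (g v) *v g' (g v) k)" unfolding \<phi>'_def by simp
      also have "\<dots> \<le> B * norm (g' (g v) k)" by (rule Bop[OF x gv])
      also have "\<dots> \<le> B * (norm k / \<delta>)"
        apply (rule mult_left_mono[OF g'2[OF gv]])
        using Bop[OF x gv, of "axis undefined 1"] by (metis norm_axis_1 mult.right_neutral norm_ge_zero order_trans)
      finally show "norm (\<phi>' v k) \<le> B' * norm k" unfolding B'_def by simp
    qed
    have hv: "h y0 \<in> K" "h y1 \<in> K" using y K_def by auto
    have "norm (\<phi> (h y1) - \<phi> (h y0)) \<le> B' * norm (h y1 - h y0)"
      by (rule differentiable_bound[OF cvK d\<phi> ob hv(2) hv(1)])
    also have "\<dots> \<le> B' * (2 * R)"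
    proof (rule mult_left_mono)
      show "norm (h y1 - h y0) \<le> 2 * R" using R[OF hv(1)] R[OF hv(2)] norm_triangle_ineq4[of "h y1" "h y0"] by linarith
      show "0 \<le> B'" using ob[OF hv(1)] onorm_pos_le[of "\<phi>' (h y0)"] d\<phi>[OF hv(1)]
        by (meson has_derivative_bounded_linear order_trans)
    qed
    finally show ?thesis unfolding \<phi>_def using gh y by (simp add: norm_minus_commute)
  qed
  show ?thesis
  proof (intro exI[of _ "B' * (2 * R)"] ballI)
    fix x v w assume x: "x \<in> X" and v: "v \<in> Ystar Dxc Y x" and w: "w \<in> Ystar Dxc Y x"
    then obtain y1 y0 where "y1 \<in> Y" "y0 \<in> Y" "v = - Dxc x y1" "w = - Dxc x y0" by (auto simp: Ystar_def)
    then show "norm (v - w) \<le> B' * (2 * R)" using main[OF x \<open>y0 \<in> Y\<close> \<open>y1 \<in> Y\<close>]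
      by (simp add: norm_minus_commute)
  qed
qed


theorem lemma3p7:
  fixes X Y :: "(real^'n::finite) set"
    and c :: "real^'n \<Rightarrow> real^'n \<Rightarrow> real"
    and Dxc Dyc :: "real^'n \<Rightarrow> real^'n \<Rightarrow> real^'n"
    and Dxy Dyx :: "real^'n \<Rightarrow> real^'n \<Rightarrow> real^'n^'n"
  assumes "standing_assumptions X Y c Dxc Dyc Dxy Dyx"
    and "loeper X Y c Dxc"
    and "\<exists>r>0. \<exists>M\<ge>1. \<forall>x0\<in>X. \<forall>x1\<in>X. \<forall>v0\<in>Ystar Dxc Y x0. \<forall>v1\<in>Ystar Dxc Y x0.
           norm (v1 - v0) \<le> r \<longrightarrow>
           (\<forall>t\<in>{0..1::real}.
              Fc c Dxc Y x0 x1 ((1 - t) *\<^sub>R v0 + t *\<^sub>R v1) - Fc c Dxc Y x0 x1 v0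
                \<le> M * t * max (Fc c Dxc Y x0 x1 v1 - Fc c Dxc Y x0 x1 v0) 0)"
  shows "QQconv X Y c Dxc"
proof -
  obtain D where D: "\<And>x v w. x \<in> X \<Longrightarrow> v \<in> Ystar Dxc Y x \<Longrightarrow> w \<in> Ystar Dxc Y x \<Longrightarrow> norm (v - w) \<le> D"
    using diam_bound[OF assms(1)] by blast
  obtain r M where r: "r > 0" and M: "M \<ge> 1" and loc: "\<forall>x0\<in>X. \<forall>x1\<in>X. \<forall>v0\<in>Ystar Dxc Y x0. \<forall>v1\<in>Ystar Dxc Y x0.
           norm (v1 - v0) \<le> r \<longrightarrow>
           (\<forall>t\<in>{0..1::real}.
              Fc c Dxc Y x0 x1 ((1 - t) *\<^sub>R v0 + t *\<^sub>R v1) - Fc c Dxc Y x0 x1 v0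
                \<le> M * t * max (Fc c Dxc Y x0 x1 v1 - Fc c Dxc Y x0 x1 v0) 0)"
    using assms(3) by blast
  have lo: "\<And>x0 x1 v0 v1 t. x0 \<in> X \<Longrightarrow> x1 \<in> X \<Longrightarrow> v0 \<in> Ystar Dxc Y x0 \<Longrightarrow> v1 \<in> Ystar Dxc Y x0 \<Longrightarrow> t \<in> {0..1} \<Longrightarrow>
        Fc c Dxc Y x0 x1 ((1 - t) *\<^sub>R v0 + t *\<^sub>R v1) \<le> max (Fc c Dxc Y x0 x1 v0) (Fc c Dxc Y x0 x1 v1)"
    using assms(2) unfolding loeper_def by blast
  have cv: "\<And>x. x \<in> X \<Longrightarrow> convex (Ystar Dxc Y x)"
    using assms(1) unfolding standing_assumptions_def Ystar_def by blast
  define M' where "M' = M * max 1 (D / r)"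
  have M'1: "M' \<ge> 1" unfolding M'_def using M by (metis max.cobounded1 mult_mono' mult_1_right zero_le_one order_trans)
  have M'M: "M' \<ge> M" unfolding M'_def using M by (simp add: mult_le_cancel_left1 )
  have M'D: "M' \<ge> M * (D / r)" unfolding M'_def using M by (intro mult_left_mono) auto
  show ?thesis unfolding QQconv_def
  proof (intro exI[of _ M'] conjI M'1 ballI)
    fix x0 x1 v0 v1 and t :: real
    assume x0: "x0 \<in> X" and x1: "x1 \<in> X" and v0: "v0 \<in> Ystar Dxc Y x0" and v1: "v1 \<in> Ystar Dxc Y x0"
      and t: "t \<in> {0..1}"
    let ?F = "Fc c Dxc Y x0 x1"
    define L where "L = norm (v1 - v0)"
    have LD: "L \<le> D" unfolding L_def using D[OF x0 v1 v0] .
    have t0: "t \<ge> 0" "t \<le> 1" using t by auto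
    show "?F ((1 - t) *\<^sub>R v0 + t *\<^sub>R v1) - ?F v0 \<le> M' * t * max (?F v1 - ?F v0) 0"
    proof (cases "?F v1 \<le> ?F v0")
      case True
      then show ?thesis using lo[OF x0 x1 v0 v1 t] by simp
    next
      case False
      then have mx: "max (?F v1 - ?F v0) 0 = ?F v1 - ?F v0" by simp
      have Fle1: "?F ((1 - s) *\<^sub>R v0 + s *\<^sub>R v1) \<le> ?F v1" if "s \<in> {0..1}" for s
        using lo[OF x0 x1 v0 v1 that] False by simp
      show ?thesis
      proof (cases "L \<le> r")
        case True
        then have "?F ((1 - t) *\<^sub>R v0 + t *\<^sub>R v1) - ?F v0 \<le> M * t * max (?F v1 - ?F v0) 0"
          using loc x0 x1 v0 v1 t unfolding L_def by blast
        also have "\<dots> \<le> M' * t * max (?F v1 - ?F v0) 0"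
          using M'M t0 by (intro mult_right_mono) auto
        finally show ?thesis .
      next
        case Lr: False
        define s where "s = r / L"
        have Lpos: "L > 0" using Lr r by linarith
        have s01: "0 < s" "s < 1" unfolding s_def using Lr r Lpos by (auto simp: field_simps)
        show ?thesis
        proof (cases "t \<ge> s")
          case True
          have "?F ((1 - t) *\<^sub>R v0 + t *\<^sub>R v1) - ?F v0 \<le> ?F v1 - ?F v0" using Fle1[OF t] by simp
          also have "\<dots> \<le> (t * L / r) * (?F v1 - ?F v0)"
          proof -
            have "1 \<le> t * L / r" using True r Lpos unfolding s_def by (simp add: field_simps)
            from mult_right_mono[OF this, of "?F v1 - ?F v0"] show ?thesis using False by simp
          qed
          also have "\<dots> \<le> M' * t * (?F v1 - ?F v0)"
          proof -
            have "t * L / r \<le> t * (D / r)" using LD t0 r by (simp add: divide_right_mono mult_left_mono)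
            also have "\<dots> \<le> t * (M * (D / r))" using M t0 LD Lpos r
            proof (intro mult_left_mono)
              have "D / r \<ge> 0" using LD Lpos r by simp
              from mult_right_mono[OF M this] show "D / r \<le> M * (D / r)" by simp
            qed (use t0 in auto)
            also have "\<dots> \<le> M' * t" using mult_left_mono[OF M'D t0(1)] by (simp add: mult.commute)
            finally show ?thesis using False by (intro mult_right_mono) auto
          qed
          finally show ?thesis using mx by simp
        next
          case ts: False
          define w where "w = (1 - s) *\<^sub>R v0 + s *\<^sub>R v1"
          have wY: "w \<in> Ystar Dxc Y x0" unfolding w_def
            using convexD[OF cv[OF x0] v0 v1] s01 by simp
          have nw: "norm (w - v0) \<le> r"
          proof -
            have "w - v0 = s *\<^sub>R (v1 - v0)" unfolding w_def by (simp add: algebra_simps)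
            then have "norm (w - v0) = s * L" using s01 unfolding L_def by simp
            then show ?thesis unfolding s_def using Lpos by simp
          qed
          define \<tau> where "\<tau> = t / s"
          have \<tau>: "\<tau> \<in> {0..1}" unfolding \<tau>_def using t0 ts s01 by auto
          have ts': "\<tau> * s = t" unfolding \<tau>_def using s01 by simp
          have vt: "(1 - \<tau>) *\<^sub>R v0 + \<tau> *\<^sub>R w = (1 - t) *\<^sub>R v0 + t *\<^sub>R v1"
          proof -
            have "(1 - \<tau>) *\<^sub>R v0 + \<tau> *\<^sub>R w = (1 - \<tau> * s) *\<^sub>R v0 + (\<tau> * s) *\<^sub>R v1"
              unfolding w_def by (simp add: algebra_simps)
            then show ?thesis using ts' by simp
          qed
          have "?F ((1 - \<tau>) *\<^sub>R v0 + \<tau> *\<^sub>R w) - ?F v0 \<le> M * \<tau> * max (?F w - ?F v0) 0"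
            using loc x0 x1 v0 wY nw \<tau> by blast
          then have A: "?F ((1 - t) *\<^sub>R v0 + t *\<^sub>R v1) - ?F v0 \<le> M * \<tau> * max (?F w - ?F v0) 0"
            using vt by simp
          have Mt: "M * (L / r) * t \<le> M' * t"
          proof -
            have "M * (L / r) \<le> M * (D / r)" using LD r M by (intro mult_left_mono divide_right_mono) auto
            then show ?thesis using M'D t0 by (intro mult_right_mono) auto
          qed
          have "max (?F w - ?F v0) 0 \<le> ?F v1 - ?F v0"
            using Fle1[of s] s01 False unfolding w_def by auto
          then have "M * \<tau> * max (?F w - ?F v0) 0 \<le> M * \<tau> * (?F v1 - ?F v0)"
            using M \<tau> by (intro mult_left_mono) auto
          also have "M * \<tau> * (?F v1 - ?F v0) = M * (L / r) * t * (?F v1 - ?F v0)" unfolding \<tau>_def s_def using r Lpos by (simp add: field_simps)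
          also have "M * (L / r) * t * (?F v1 - ?F v0) \<le> M' * t * (?F v1 - ?F v0)"
            using False mult_right_mono[OF Mt, of "?F v1 - ?F v0"] by simp
          finally have "M * \<tau> * max (?F w - ?F v0) 0 \<le> M' * t * (?F v1 - ?F v0)" .
          then show ?thesis using A mx by simp
        qed
      qed
    qed
  qed
qed

end
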